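(* For $f : X \to \mathbb{R}$, the following are equivalent: Player II has a winning strategy in $\Gamma'(f)$; Player II has winning strategies in both $\Gamma(f)$ and $\Gamma(-f)$; $f$ is of Baire class 1.
   Context: Let $A$ be a non-empty countable set and $T$ a pruned tree on $A$ (a set of finite sequences of elements of $A$, closed under initial segments, in which every sequence has a proper extension in $T$). Let $X$ be the set of infinite branches of $T$, with the topology generated by the cylinder sets $O(s) = \{x \in X : s \text{ is an initial segment of } x\}$, $s \in T$. Baire class 1 means a pointwise limit of continuous functions. The game $\Gamma(g)$ for $g : X \to \mathbb{R}$: Player I and Player II alternate, Player I moving first; Player I plays $x_0, x_1, \dots \in A$ subject to $(x_0,\dots,x_t) \in T$ for all $t$, and after each move $x_t$ Player II plays a real $v_t$; Player II wins iff $g(x_0,x_1,\dots) = \limsup_t v_t$. The game $\Gamma'(f)$ is the same except that Player II's moves are pairs of reals $(v_t, w_t)$, and Player II wins iff $f(x_0,x_1,\dots) = \limsup_t v_t = \liminf_t w_t$; otherwise Player I wins. *)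

theory Defs
  imports "HOL-Analysis.Analysis"
begin

definition pruned_tree :: "'a set \<Rightarrow> 'a list set \<Rightarrow> bool" where
  "pruned_tree A T \<longleftrightarrow> T \<subseteq> lists A
     \<and> (\<forall>s\<in>T. \<forall>n. take n s \<in> T)
     \<and> (\<forall>s\<in>T. \<exists>u\<in>T. length s < length u \<and> take (length s) u = s)"

definition init_seg :: "(nat \<Rightarrow> 'a) \<Rightarrow> nat \<Rightarrow> 'a list" where
  "init_seg x n = map x [0..<n]"

definition branches :: "'a list set \<Rightarrow> (nat \<Rightarrow> 'a) set" where
  "branches T = {x. \<forall>n. init_seg x n \<in> T}"

definition cyl :: "'a list set \<Rightarrow> 'a list \<Rightarrow> (nat \<Rightarrow> 'a) set" where
  "cyl T s = {x \<in> branches T. init_seg x (length s) = s}"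

definition branch_topology :: "'a list set \<Rightarrow> (nat \<Rightarrow> 'a) topology" where
  "branch_topology T = topology_generated_by (cyl T ` T)"

definition baire_class_1 :: "'a list set \<Rightarrow> ((nat \<Rightarrow> 'a) \<Rightarrow> real) \<Rightarrow> bool" where
  "baire_class_1 T f \<longleftrightarrow>
     (\<exists>F :: nat \<Rightarrow> (nat \<Rightarrow> 'a) \<Rightarrow> real.
        (\<forall>n. continuous_map (branch_topology T) euclideanreal (F n))
        \<and> (\<forall>x\<in>branches T. (\<lambda>n. F n x) \<longlonglongrightarrow> f x))"

text \<open>A strategy for II assigns to
  Player I's moves (x_0,...,x_t) the answer v_t (II's own earlier moves are determined
  by the strategy).\<close>
definition II_wins_Gamma :: "'a list set \<Rightarrow> ((nat \<Rightarrow> 'a) \<Rightarrow> real) \<Rightarrow> bool" where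
  "II_wins_Gamma T g \<longleftrightarrow>
     (\<exists>\<sigma> :: 'a list \<Rightarrow> real. \<forall>x\<in>branches T.
        limsup (\<lambda>t. ereal (\<sigma> (init_seg x (Suc t)))) = ereal (g x))"

definition II_wins_Gamma' :: "'a list set \<Rightarrow> ((nat \<Rightarrow> 'a) \<Rightarrow> real) \<Rightarrow> bool" where
  "II_wins_Gamma' T f \<longleftrightarrow>
     (\<exists>\<sigma> :: 'a list \<Rightarrow> real \<times> real. \<forall>x\<in>branches T.
        limsup (\<lambda>t. ereal (fst (\<sigma> (init_seg x (Suc t))))) = ereal (f x)
        \<and> liminf (\<lambda>t. ereal (snd (\<sigma> (init_seg x (Suc t))))) = ereal (f x))"

end

theory Submission
  imports Defs
begin

lemma length_init_seg[simp]: "length (init_seg x n) = n"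
  by (simp add: init_seg_def)

lemma init_seg_take: "k \<le> n \<Longrightarrow> take k (init_seg x n) = init_seg x k"
  by (simp add: init_seg_def take_map)

lemma init_seg_eq_mono: "init_seg x n = init_seg y n \<Longrightarrow> k \<le> n \<Longrightarrow> init_seg x k = init_seg y k"
  by (metis init_seg_take)

lemma in_cyl_self: "x \<in> branches T \<Longrightarrow> x \<in> cyl T (init_seg x t)"
  by (simp add: cyl_def)

lemma cyl_mono: "t \<le> t' \<Longrightarrow> cyl T (init_seg x t') \<subseteq> cyl T (init_seg x t)"
  unfolding cyl_def using init_seg_eq_mono by fastforce

lemma topspace_bt: "topspace (branch_topology T) = branches T"
proof
  show "topspace (branch_topology T) \<subseteq> branches T"
    by (auto simp: branch_topology_def cyl_def)
  show "branches T \<subseteq> topspace (branch_topology T)"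
  proof
    fix x assume x: "x \<in> branches T"
    then have "init_seg x 0 \<in> T" by (simp add: branches_def)
    with in_cyl_self[OF x, of 0] show "x \<in> topspace (branch_topology T)"
      by (auto simp: branch_topology_def)
  qed
qed

lemma open_bt_nbhd:
  assumes "openin (branch_topology T) V" "x \<in> V"
  shows "\<exists>t. cyl T (init_seg x t) \<subseteq> V"
proof -
  have "generate_topology_on (cyl T ` T) V"
    using assms(1) by (simp add: branch_topology_def openin_topology_generated_by_iff)
  then show ?thesis using assms(2)
  proof (induction arbitrary: x)
    case Empty then show ?case by simp
  next
    case (Int a b)
    then obtain t1 t2 where "cyl T (init_seg x t1) \<subseteq> a" "cyl T (init_seg x t2) \<subseteq> b" by blast
    then have "cyl T (init_seg x (max t1 t2)) \<subseteq> a \<inter> b"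
      using cyl_mono[of t1 "max t1 t2" T x] cyl_mono[of t2 "max t1 t2" T x] by auto
    then show ?case by blast
  next
    case (UN K)
    then obtain k where "k \<in> K" "x \<in> k" by blast
    with UN.IH obtain t where "cyl T (init_seg x t) \<subseteq> k" by blast
    with \<open>k \<in> K\<close> show ?case by blast
  next
    case (Basis s)
    then obtain s0 where "s = cyl T s0" by blast
    with Basis have "init_seg x (length s0) = s0" by (simp add: cyl_def)
    with \<open>s = cyl T s0\<close> show ?case by (metis order_refl)
  qed
qed

lemma cont_bt_nbhd:
  assumes "continuous_map (branch_topology T) euclideanreal g" "x \<in> branches T" "e > 0"
  shows "\<exists>t. \<forall>y\<in>cyl T (init_seg x t). \<bar>g y - g x\<bar> < e"
proof -
  have "openin (branch_topology T) {y \<in> topspace (branch_topology T). g y \<in> ball (g x) e}"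
    using assms(1) unfolding continuous_map_def by (metis open_ball open_openin)
  moreover have "x \<in> {y \<in> topspace (branch_topology T). g y \<in> ball (g x) e}"
    using assms by (simp add: topspace_bt)
  ultimately obtain t where "cyl T (init_seg x t) \<subseteq> {y \<in> topspace (branch_topology T). g y \<in> ball (g x) e}"
    using open_bt_nbhd by blast
  then show ?thesis by (auto simp: dist_real_def abs_minus_commute)
qed

lemma locconst_cont:
  assumes "\<And>x y. x \<in> branches T \<Longrightarrow> y \<in> branches T \<Longrightarrow> init_seg x n = init_seg y n \<Longrightarrow> g x = g y"
  shows "continuous_map (branch_topology T) euclideanreal g"
  unfolding continuous_map_def
proof (intro conjI allI impI)
  show "g \<in> topspace (branch_topology T) \<rightarrow> topspace euclideanreal" by simp
  fix U :: "real set" assume "openin euclideanreal U"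
  let ?S = "{x \<in> topspace (branch_topology T). g x \<in> U}"
  have eq: "?S = \<Union> ((\<lambda>x. cyl T (init_seg x n)) ` ?S)"
  proof
    show "?S \<subseteq> \<Union> ((\<lambda>x. cyl T (init_seg x n)) ` ?S)"
      using in_cyl_self by (fastforce simp: topspace_bt)
    show "\<Union> ((\<lambda>x. cyl T (init_seg x n)) ` ?S) \<subseteq> ?S"
    proof
      fix y assume "y \<in> \<Union> ((\<lambda>x. cyl T (init_seg x n)) ` ?S)"
      then obtain x where x: "x \<in> ?S" "y \<in> cyl T (init_seg x n)" by blast
      then have "y \<in> branches T" "init_seg y n = init_seg x n" by (auto simp: cyl_def)
      with x assms[of x y] show "y \<in> ?S" by (auto simp: topspace_bt)
    qed
  qed
  have "generate_topology_on (cyl T ` T) (\<Union> ((\<lambda>x. cyl T (init_seg x n)) ` ?S))"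
  proof (rule generate_topology_on.UN)
    fix k assume "k \<in> (\<lambda>x. cyl T (init_seg x n)) ` ?S"
    then obtain x where "x \<in> ?S" "k = cyl T (init_seg x n)" by blast
    then have "init_seg x n \<in> T" by (simp add: topspace_bt branches_def)
    with \<open>k = _\<close> show "generate_topology_on (cyl T ` T) k" by (auto intro: generate_topology_on.Basis)
  qed
  then show "openin (branch_topology T) ?S"
    by (subst eq) (simp add: branch_topology_def openin_topology_generated_by_iff)
qed

definition Uu :: "(nat \<Rightarrow> real) \<Rightarrow> nat \<Rightarrow> nat \<Rightarrow> real" where
  "Uu u k n = Max (u ` {k..n})"
definition Ll :: "(nat \<Rightarrow> real) \<Rightarrow> nat \<Rightarrow> nat \<Rightarrow> real" where
  "Ll l k n = Min (l ` {k..n})"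
definition Mm :: "(nat \<Rightarrow> real) \<Rightarrow> (nat \<Rightarrow> real) \<Rightarrow> nat \<Rightarrow> nat" where
  "Mm u l n = Max ({m. m \<le> n \<and> Ll l m n \<le> Uu u m n + 1 / (real m + 1)} \<union> {0})"
definition Gg :: "(nat \<Rightarrow> real) \<Rightarrow> (nat \<Rightarrow> real) \<Rightarrow> nat \<Rightarrow> real" where
  "Gg u l n = Uu u (Mm u l n) n"

lemma Gg_local:
  assumes "\<And>i. i \<le> n \<Longrightarrow> u i = u' i" "\<And>i. i \<le> n \<Longrightarrow> l i = l' i"
  shows "Gg u l n = Gg u' l' n"
proof -
  have U: "\<And>m. Uu u m n = Uu u' m n" unfolding Uu_def
    by (intro arg_cong[where f=Max] image_cong) (auto simp: assms)
  have L: "\<And>m. Ll l m n = Ll l' m n" unfolding Ll_def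
    by (intro arg_cong[where f=Min] image_cong) (auto simp: assms)
  show ?thesis unfolding Gg_def Mm_def U L ..
qed

lemma limsup_ev:
  assumes "limsup (\<lambda>i. ereal (u i)) = ereal c" "e > 0"
  shows "eventually (\<lambda>i. u i < c + e) sequentially"
proof -
  have "limsup (\<lambda>i. ereal (u i)) < ereal (c + e)" using assms by simp
  from Limsup_lessD[OF this] show ?thesis by simp
qed

lemma limsup_freq:
  assumes "limsup (\<lambda>i. ereal (u i)) = ereal c" "e > 0"
  shows "\<exists>i\<ge>k. u i > c - e"
proof (rule ccontr)
  assume "\<not> ?thesis"
  then have "eventually (\<lambda>i. ereal (u i) \<le> ereal (c - e)) sequentially"
    unfolding eventually_sequentially by (auto simp: not_less)
  from Limsup_bounded[OF this] assms show False by simp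
qed

lemma liminf_ev:
  assumes "liminf (\<lambda>i. ereal (l i)) = ereal c" "e > 0"
  shows "eventually (\<lambda>i. l i > c - e) sequentially"
proof -
  have "ereal (c - e) < liminf (\<lambda>i. ereal (l i))" using assms by simp
  from less_LiminfD[OF this] show ?thesis by simp
qed

lemma liminf_freq:
  assumes "liminf (\<lambda>i. ereal (l i)) = ereal c" "e > 0"
  shows "\<exists>i\<ge>k. l i < c + e"
proof (rule ccontr)
  assume "\<not> ?thesis"
  then have "eventually (\<lambda>i. ereal (c + e) \<le> ereal (l i)) sequentially"
    unfolding eventually_sequentially by (auto simp: not_less)
  from Liminf_bounded[OF this] assms show False by simp
qed

lemma Gg_lim:
  assumes u: "limsup (\<lambda>i. ereal (u i)) = ereal c" and l: "liminf (\<lambda>i. ereal (l i)) = ereal c"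
  shows "(\<lambda>n. Gg u l n) \<longlonglongrightarrow> c"
proof (rule LIMSEQ_I)
  fix r :: real assume r: "r > 0"
  define e where "e = r / 3"
  have e: "e > 0" using r by (simp add: e_def)
  have "eventually (\<lambda>i. u i < c + e \<and> l i > c - e) sequentially"
    using limsup_ev[OF u e] liminf_ev[OF l e] by (rule eventually_conj)
  then obtain k0 where k0: "\<And>i. i \<ge> k0 \<Longrightarrow> u i < c + e \<and> l i > c - e"
    unfolding eventually_sequentially by blast
  obtain n1 where n1: "inverse (real (Suc n1)) < e" using reals_Archimedean[OF e] by blast
  define K where "K = max (max k0 1) n1"
  have K1: "K \<ge> 1" "K \<ge> k0" by (auto simp: K_def)
  have Ke: "1 / (real K + 1) < e"
  proof -
    have "1 / (real K + 1) \<le> 1 / (real n1 + 1)"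
      by (intro divide_left_mono) (auto simp: K_def)
    also have "\<dots> = inverse (real (Suc n1))" by (simp add: field_simps)
    finally show ?thesis using n1 by simp
  qed
  define d where "d = 1 / (2 * (real K + 1))"
  have d: "d > 0" by (simp add: d_def)
  obtain i1 where i1: "i1 \<ge> K" "u i1 > c - d" using limsup_freq[OF u d] by blast
  obtain i2 where i2: "i2 \<ge> K" "l i2 < c + d" using liminf_freq[OF l d] by blast
  show "\<exists>no. \<forall>n\<ge>no. norm (Gg u l n - c) < r"
  proof (intro exI allI impI)
    fix n assume n: "n \<ge> max i1 i2"
    define S where "S = {m. m \<le> n \<and> Ll l m n \<le> Uu u m n + 1 / (real m + 1)} \<union> {0}"
    have finS: "finite S" unfolding S_def by (rule finite_Un[THEN iffD2]) (auto intro: finite_subset[of _ "{..n}"])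
    have KS: "K \<in> S"
    proof -
      have "u i1 \<le> Uu u K n" unfolding Uu_def using i1 n by (intro Max_ge) auto
      moreover have "Ll l K n \<le> l i2" unfolding Ll_def using i2 n by (intro Min_le) auto
      moreover have "2 * d = 1 / (real K + 1)" by (simp add: d_def field_simps)
      ultimately have "Ll l K n \<le> Uu u K n + 1 / (real K + 1)" using i1 i2 by linarith
      then show ?thesis using i1 n by (simp add: S_def)
    qed
    define m where "m = Mm u l n"
    have mS: "m = Max S" by (simp add: m_def Mm_def S_def)
    have mK: "m \<ge> K" using Max_ge[OF finS KS] mS by simp
    have "m \<in> S" using Max_in[OF finS] mS by (auto simp: S_def)
    then have mn: "m \<le> n" and C: "Ll l m n \<le> Uu u m n + 1 / (real m + 1)"
      using mK K1 by (auto simp: S_def)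
    have "Uu u m n \<in> u ` {m..n}" unfolding Uu_def using mn by (intro Max_in) auto
    then obtain i where i: "i \<ge> m" "Uu u m n = u i" by auto
    have "Ll l m n \<in> l ` {m..n}" unfolding Ll_def using mn by (intro Min_in) auto
    then obtain j where j: "j \<ge> m" "Ll l m n = l j" by auto
    have ui: "u i < c + e" using k0[of i] i mK K1 by auto
    have lj: "l j > c - e" using k0[of j] j mK K1 by auto
    have "1 / (real m + 1) \<le> 1 / (real K + 1)"
      by (intro divide_left_mono) (use mK in auto)
    then have "Uu u m n > c - 2 * e" using C j lj Ke by linarith
    moreover have "Gg u l n = Uu u m n" by (simp add: Gg_def m_def)
    ultimately show "norm (Gg u l n - c) < r" using i ui by (simp add: e_def abs_less_iff)
  qed
qed

lemma baire_imp_conv: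
  assumes "baire_class_1 T f"
  shows "\<exists>\<phi>. \<forall>x\<in>branches T. (\<lambda>t. \<phi> (init_seg x (Suc t))) \<longlonglongrightarrow> f x"
proof -
  obtain F :: "nat \<Rightarrow> (nat \<Rightarrow> 'a) \<Rightarrow> real" where
    Fc: "\<And>n. continuous_map (branch_topology T) euclideanreal (F n)" and
    Fl: "\<And>x. x \<in> branches T \<Longrightarrow> (\<lambda>n. F n x) \<longlonglongrightarrow> f x"
    using assms unfolding baire_class_1_def by blast
  define ys where "ys s = (SOME y. y \<in> cyl T s)" for s
  define P where "P n s = (\<forall>m\<le>n. \<forall>y\<in>cyl T s. \<bar>F m y - F m (ys s)\<bar> \<le> 1 / (real n + 1))" for n s
  define N where "N s = Max ({n. n \<le> length s \<and> P n s} \<union> {0})" for s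
  define \<phi> where "\<phi> s = F (N s) (ys s)" for s
  have "(\<lambda>t. \<phi> (init_seg x (Suc t))) \<longlonglongrightarrow> f x" if x: "x \<in> branches T" for x
  proof (rule LIMSEQ_I)
    fix r :: real assume r: "r > 0"
    define e where "e = r / 2"
    have e: "e > 0" using r by (simp add: e_def)
    obtain n2 where n2: "\<And>n. n \<ge> n2 \<Longrightarrow> norm (F n x - f x) < e"
      using LIMSEQ_D[OF Fl[OF x] e] by blast
    obtain n1 where n1: "inverse (real (Suc n1)) < e" using reals_Archimedean[OF e] by blast
    define K where "K = max (max n2 n1) 1"
    have K: "K \<ge> 1" "K \<ge> n2" by (auto simp: K_def)
    have Ke: "1 / (real K + 1) < e"
    proof -
      have "1 / (real K + 1) \<le> 1 / (real n1 + 1)"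
        by (intro divide_left_mono) (auto simp: K_def)
      also have "\<dots> = inverse (real (Suc n1))" by (simp add: field_simps)
      finally show ?thesis using n1 by simp
    qed
    define d where "d = 1 / (2 * (real K + 1))"
    have d: "d > 0" by (simp add: d_def)
    have "\<forall>m. \<exists>t. m \<le> K \<longrightarrow> (\<forall>y\<in>cyl T (init_seg x t). \<bar>F m y - F m x\<bar> < d)"
      using cont_bt_nbhd[OF Fc x d] by blast
    then obtain tm where tm: "\<And>m y. m \<le> K \<Longrightarrow> y \<in> cyl T (init_seg x (tm m)) \<Longrightarrow> \<bar>F m y - F m x\<bar> < d"
      by metis
    define t0 where "t0 = max K (Max (tm ` {..K}))"
    show "\<exists>no. \<forall>t\<ge>no. norm (\<phi> (init_seg x (Suc t)) - f x) < r"
    proof (intro exI allI impI)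
      fix t assume t: "t \<ge> t0"
      define s where "s = init_seg x (Suc t)"
      have xs: "x \<in> cyl T s" using in_cyl_self[OF x] by (simp add: s_def)
      then have ys: "ys s \<in> cyl T s" unfolding ys_def by (rule someI[of "\<lambda>y. y \<in> cyl T s"])
      have sub: "cyl T s \<subseteq> cyl T (init_seg x (tm m))" if "m \<le> K" for m
      proof -
        have "tm m \<le> Max (tm ` {..K})" using that by (intro Max_ge) auto
        then have "tm m \<le> Suc t" using t that by (auto simp: t0_def intro: le_SucI)
        then show ?thesis unfolding s_def by (rule cyl_mono)
      qed
      have PK: "P K s" unfolding P_def
      proof (intro allI impI ballI)
        fix m y assume m: "m \<le> K" and y: "y \<in> cyl T s"
        have "\<bar>F m y - F m x\<bar> < d" using tm[OF m] sub[OF m] y by blast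
        moreover have "\<bar>F m (ys s) - F m x\<bar> < d" using tm[OF m] sub[OF m] ys by blast
        moreover have "2 * d = 1 / (real K + 1)" by (simp add: d_def field_simps)
        ultimately show "\<bar>F m y - F m (ys s)\<bar> \<le> 1 / (real K + 1)" by linarith
      qed
      define S where "S = {n. n \<le> length s \<and> P n s} \<union> {0}"
      have finS: "finite S" unfolding S_def by (rule finite_Un[THEN iffD2]) (auto intro: finite_subset[of _ "{..length s}"])
      have KS: "K \<in> S" using PK t by (simp add: S_def s_def t0_def)
      have NS: "N s = Max S" by (simp add: N_def S_def)
      have NK: "N s \<ge> K" using Max_ge[OF finS KS] NS by simp
      have "N s \<in> S" using Max_in[OF finS] NS by (auto simp: S_def)
      then have "P (N s) s" using NK K by (auto simp: S_def)
      then have "\<bar>F (N s) x - F (N s) (ys s)\<bar> \<le> 1 / (real (N s) + 1)"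
        unfolding P_def using xs by blast
      moreover have "1 / (real (N s) + 1) \<le> 1 / (real K + 1)"
        by (intro divide_left_mono) (use NK in auto)
      moreover have "norm (F (N s) x - f x) < e" using n2 NK K by simp
      ultimately have "\<bar>\<phi> s - f x\<bar> < 2 * e" using Ke unfolding \<phi>_def by simp
      then show "norm (\<phi> (init_seg x (Suc t)) - f x) < r" by (simp add: s_def e_def)
    qed
  qed
  then show ?thesis by blast
qed

lemma conv_imp_gamma:
  assumes "\<forall>x\<in>branches T. (\<lambda>t. \<phi> (init_seg x (Suc t))) \<longlonglongrightarrow> f x"
  shows "II_wins_Gamma T f \<and> II_wins_Gamma T (\<lambda>x. - f x)"
proof -
  have "limsup (\<lambda>t. ereal (\<phi> (init_seg x (Suc t)))) = ereal (f x)" if "x \<in> branches T" for x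
    using assms that by (intro lim_imp_Limsup) (auto intro: tendsto_ereal)
  moreover have "limsup (\<lambda>t. ereal (- \<phi> (init_seg x (Suc t)))) = ereal (- f x)" if "x \<in> branches T" for x
    using assms that by (intro lim_imp_Limsup) (auto intro!: tendsto_ereal tendsto_minus)
  ultimately show ?thesis unfolding II_wins_Gamma_def
    by (intro conjI exI[where x=\<phi>] exI[where x="\<lambda>s. - \<phi> s"] ballI) auto
qed

lemma uminus_liminf: "liminf (\<lambda>t. ereal (- a t)) = - limsup (\<lambda>t. ereal (a t))"
  using ereal_Liminf_uminus[of sequentially "\<lambda>t. ereal (a t)"] by simp

lemma gamma_imp_baire:
  assumes "II_wins_Gamma T f" "II_wins_Gamma T (\<lambda>x. - f x)"
  shows "baire_class_1 T f"
proof -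
  obtain s1 where s1: "\<And>x. x \<in> branches T \<Longrightarrow> limsup (\<lambda>t. ereal (s1 (init_seg x (Suc t)))) = ereal (f x)"
    using assms(1) unfolding II_wins_Gamma_def by blast
  obtain s2 where s2: "\<And>x. x \<in> branches T \<Longrightarrow> limsup (\<lambda>t. ereal (s2 (init_seg x (Suc t)))) = ereal (- f x)"
    using assms(2) unfolding II_wins_Gamma_def by blast
  define F where "F n x = Gg (\<lambda>i. s1 (init_seg x (Suc i))) (\<lambda>i. - s2 (init_seg x (Suc i))) n" for n x
  have "continuous_map (branch_topology T) euclideanreal (F n)" for n
  proof (rule locconst_cont[where n="Suc n"])
    fix x y :: "nat \<Rightarrow> 'a" assume "init_seg x (Suc n) = init_seg y (Suc n)"
    then have "\<And>i. i \<le> n \<Longrightarrow> init_seg x (Suc i) = init_seg y (Suc i)"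
      by (rule init_seg_eq_mono) simp
    then show "F n x = F n y" unfolding F_def by (intro Gg_local) auto
  qed
  moreover have "(\<lambda>n. F n x) \<longlonglongrightarrow> f x" if x: "x \<in> branches T" for x :: "nat \<Rightarrow> 'a"
    unfolding F_def
  proof (rule Gg_lim)
    show "limsup (\<lambda>i. ereal (s1 (init_seg x (Suc i)))) = ereal (f x)" using s1[OF x] .
    show "liminf (\<lambda>i. ereal (- s2 (init_seg x (Suc i)))) = ereal (f x)"
      using s2[OF x] by (simp add: uminus_liminf)
  qed
  ultimately show ?thesis unfolding baire_class_1_def by blast
qed

lemma gamma'_iff: "II_wins_Gamma' T f \<longleftrightarrow> II_wins_Gamma T f \<and> II_wins_Gamma T (\<lambda>x. - f x)"
proof
  assume "II_wins_Gamma' T f"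
  then obtain \<sigma> where s: "\<And>x. x \<in> branches T \<Longrightarrow>
        limsup (\<lambda>t. ereal (fst (\<sigma> (init_seg x (Suc t))))) = ereal (f x)
        \<and> liminf (\<lambda>t. ereal (snd (\<sigma> (init_seg x (Suc t))))) = ereal (f x)"
    unfolding II_wins_Gamma'_def by blast
  have "II_wins_Gamma T f" unfolding II_wins_Gamma_def
    using s by (intro exI[where x="\<lambda>s. fst (\<sigma> s)"]) blast
  moreover have "limsup (\<lambda>t. ereal (- snd (\<sigma> (init_seg x (Suc t))))) = ereal (- f x)"
    if "x \<in> branches T" for x
  proof -
    have "liminf (\<lambda>t. ereal (- (- snd (\<sigma> (init_seg x (Suc t)))))) = ereal (f x)" using s[OF that] by simp
    then have "- limsup (\<lambda>t. ereal (- snd (\<sigma> (init_seg x (Suc t))))) = ereal (f x)"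
      by (simp only: uminus_liminf)
    then show ?thesis by (metis ereal_uminus_uminus uminus_ereal.simps(1))
  qed
  then have "II_wins_Gamma T (\<lambda>x. - f x)" unfolding II_wins_Gamma_def
    by (intro exI[where x="\<lambda>s. - snd (\<sigma> s)"]) blast
  ultimately show "II_wins_Gamma T f \<and> II_wins_Gamma T (\<lambda>x. - f x)" ..
next
  assume "II_wins_Gamma T f \<and> II_wins_Gamma T (\<lambda>x. - f x)"
  then obtain s1 s2 where s1: "\<And>x. x \<in> branches T \<Longrightarrow> limsup (\<lambda>t. ereal (s1 (init_seg x (Suc t)))) = ereal (f x)"
    and s2: "\<And>x. x \<in> branches T \<Longrightarrow> limsup (\<lambda>t. ereal (s2 (init_seg x (Suc t)))) = ereal (- f x)"
    unfolding II_wins_Gamma_def by blast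
  have "liminf (\<lambda>t. ereal (- s2 (init_seg x (Suc t)))) = ereal (f x)" if "x \<in> branches T" for x
    using s2[OF that] by (simp add: uminus_liminf)
  then show "II_wins_Gamma' T f" unfolding II_wins_Gamma'_def
    using s1 by (intro exI[where x="\<lambda>s. (s1 s, - s2 s)"]) simp
qed

theorem mainTheorem16:
  fixes A :: "'a set" and T :: "'a list set" and f :: "(nat \<Rightarrow> 'a) \<Rightarrow> real"
  assumes "A \<noteq> {}" and "countable A" and "pruned_tree A T"
  shows "(II_wins_Gamma' T f \<longleftrightarrow> II_wins_Gamma T f \<and> II_wins_Gamma T (\<lambda>x. - f x))
       \<and> (II_wins_Gamma T f \<and> II_wins_Gamma T (\<lambda>x. - f x) \<longleftrightarrow> baire_class_1 T f)"
proof -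
  have "baire_class_1 T f \<Longrightarrow> II_wins_Gamma T f \<and> II_wins_Gamma T (\<lambda>x. - f x)"
  proof -
    assume "baire_class_1 T f"
    then obtain \<phi> where "\<forall>x\<in>branches T. (\<lambda>t. \<phi> (init_seg x (Suc t))) \<longlonglongrightarrow> f x"
      using baire_imp_conv by blast
    then show ?thesis by (rule conv_imp_gamma)
  qed
  then show ?thesis using gamma'_iff[of T f] gamma_imp_baire[of T f] by blast
qed

end
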